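(* Let $K$ be a field, let $P$ be a convex $n$-gon and let $D$ be a dissection of $P$ which divides $P$ into subpolygons $P_1,\ldots,P_\ell$ with $P_i$ a $d_i$-gon ($d_i\ge 3$). Let $f:\mathrm{diag}(P)\to K$ be the weak frieze with respect to $D$ whose restriction to $\mathrm{diag}(P_i)$ is the constant map with value $1$ for every $i$. Let $M_f$ be the associated weak frieze matrix. Then $$\det(M_f) = (-1)^{\ell-1}\prod_{i=1}^{\ell}(-1)^{d_i-1}(d_i-1) = (-1)^{n-1}\prod_{i=1}^{\ell}(d_i-1).$$
   Context: For a convex polygon with vertices $1,\ldots,n$ (cyclically ordered), a diagonal is any unordered pair $\{i,j\}$ of distinct vertices (including boundary edges); $\mathrm{diag}(P)$ is the set of all diagonals. A diagonal is internal if its endpoints are not cyclic neighbours. Diagonals $\{i,j\}$, $\{k,\ell\}$ cross if cyclically $i<k<j<\ell$ or $i<\ell<j<k$. A dissection is a set of pairwise non-crossing internal diagonals. A map $f:\mathrm{diag}(P)\to K$ (write $f(i,j)=f(\{i,j\})$) is a weak frieze with respect to a dissection $D$ if for every pair of crossing diagonals $\{i,j\},\{k,\ell\}$ with at least one in $D$, $f(i,j)f(k,\ell)=f(i,k)f(j,\ell)+f(i,\ell)f(j,k)$. Given subpolygons cut out by $D$ and weak friezes on them agreeing (with nonzero value) on shared diagonals, there is a unique weak frieze on $P$ with respect to $D$ restricting to them; here this is applied with all pieces constantly $1$. The weak frieze matrix $M_f$ is the symmetric $n\times n$ matrix with entries $m_{i,i}=0$ and $m_{i,j}=f(i,j)$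 for $i\neq j$. *)

theory Defs
  imports "Jordan_Normal_Form.Determinant"
begin

text \<open>Convex n-gon with vertices 0,...,n-1 in cyclic order. Diagonals are
  two-element sets of vertices.\<close>

definition crosses :: "nat \<Rightarrow> nat \<Rightarrow> nat \<Rightarrow> nat \<Rightarrow> bool" where
  "crosses i j k l \<longleftrightarrow>
     (let a = min i j; b = max i j; c = min k l; d = max k l in
       (a < c \<and> c < b \<and> b < d) \<or> (c < a \<and> a < d \<and> d < b))"

definition internal_diag :: "nat \<Rightarrow> nat \<Rightarrow> nat \<Rightarrow> bool" where
  "internal_diag n i j \<longleftrightarrow> i < n \<and> j < n \<and> i \<noteq> j \<and>
     j \<noteq> (i + 1) mod n \<and> i \<noteq> (j + 1) mod n"

definition dissection :: "nat \<Rightarrow> nat set set \<Rightarrow> bool" where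
  "dissection n D \<longleftrightarrow>
     (\<forall>e\<in>D. \<exists>i j. e = {i, j} \<and> internal_diag n i j) \<and>
     (\<forall>i j k l. {i, j} \<in> D \<and> {k, l} \<in> D \<longrightarrow> \<not> crosses i j k l)"

definition weak_frieze :: "nat \<Rightarrow> nat set set \<Rightarrow> (nat set \<Rightarrow> 'a::comm_ring_1) \<Rightarrow> bool" where
  "weak_frieze n D f \<longleftrightarrow>
     (\<forall>i j k l. i < n \<and> j < n \<and> k < n \<and> l < n \<and> crosses i j k l \<and>
        ({i, j} \<in> D \<or> {k, l} \<in> D) \<longrightarrow>
        f {i, j} * f {k, l} = f {i, k} * f {j, l} + f {i, l} * f {j, k})"

definition one_side :: "nat \<Rightarrow> nat set set \<Rightarrow> nat set \<Rightarrow> bool" where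
  "one_side n D S \<longleftrightarrow> S \<subseteq> {..<n} \<and>
     (\<forall>i j. {i, j} \<in> D \<and> i < j \<longrightarrow> S \<subseteq> {i..j} \<or> S \<inter> {i<..<j} = {})"

text \<open>The subpolygons cut out by D, given by their vertex sets: the maximal
  vertex sets not separated by any diagonal of D.\<close>
definition subpolygons :: "nat \<Rightarrow> nat set set \<Rightarrow> nat set set" where
  "subpolygons n D = {S. one_side n D S \<and> (\<forall>T. one_side n D T \<and> S \<subseteq> T \<longrightarrow> T = S)}"

definition frieze_matrix :: "nat \<Rightarrow> (nat set \<Rightarrow> 'a::zero) \<Rightarrow> 'a mat" where
  "frieze_matrix n f = mat n n (\<lambda>(i, j). if i = j then 0 else f {i, j})"

end

theory Submission
  imports Defs
begin


lemma det_rows_add_multiple: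
  fixes A :: "'a::comm_ring_1 mat"
  assumes A: "A \<in> carrier_mat n n" and k: "k < n" "k \<notin> set xs"
    and xs: "set xs \<subseteq> {..<n}" "distinct xs"
  shows "det (mat n n (\<lambda>(r,s). if r \<in> set xs then A $$ (r,s) + c r * A $$ (k,s) else A $$ (r,s))) = det A"
  using k xs
proof (induction xs)
  case Nil
  have "mat n n (\<lambda>(r,s). if r \<in> set [] then A $$ (r,s) + c r * A $$ (k,s) else A $$ (r,s)) = A"
    using A by (intro eq_matI) auto
  then show ?case by simp
next
  case (Cons x xs)
  let ?M = "\<lambda>xs. mat n n (\<lambda>(r,s). if r \<in> set xs then A $$ (r,s) + c r * A $$ (k,s) else A $$ (r,s))"
  have eq: "?M (x#xs) = addrow (c x) x k (?M xs)"
    using Cons.prems by (intro eq_matI) (auto simp: algebra_simps)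
  have "det (addrow (c x) x k (?M xs)) = det (?M xs)"
    by (rule det_addrow[OF k(1)]) (use Cons.prems in auto)
  then show ?case using eq Cons by simp
qed

lemma det_row_add_sum:
  fixes A :: "'a::comm_ring_1 mat"
  assumes A: "A \<in> carrier_mat n n" and k: "k < n" "k \<notin> set xs"
    and xs: "set xs \<subseteq> {..<n}" "distinct xs"
  shows "det (mat n n (\<lambda>(r,s). if r = k then A $$ (r,s) + (\<Sum>x\<in>set xs. c x * A $$ (x,s)) else A $$ (r,s))) = det A"
  using k xs
proof (induction xs)
  case Nil
  have "mat n n (\<lambda>(r,s). if r = k then A $$ (r,s) + (\<Sum>x\<in>set []. c x * A $$ (x,s)) else A $$ (r,s)) = A"
    using A by (intro eq_matI) auto
  then show ?case by simp
next
  case (Cons x xs)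
  let ?M = "\<lambda>xs. mat n n (\<lambda>(r,s). if r = k then A $$ (r,s) + (\<Sum>x\<in>set xs. c x * A $$ (x,s)) else A $$ (r,s))"
  have eq: "?M (x#xs) = addrow (c x) k x (?M xs)"
    using Cons.prems by (intro eq_matI) (auto simp: algebra_simps)
  have "det (addrow (c x) k x (?M xs)) = det (?M xs)"
    by (rule det_addrow) (use Cons.prems in auto)
  then show ?case using eq Cons by simp
qed

lemma det_const_diag:
  fixes a b :: "'a::comm_ring_1"
  assumes n: "n \<ge> 1"
  shows "det (mat n n (\<lambda>(r,s). if r = s then a + b else a)) = b ^ (n - 1) * (b + of_nat n * a)"
proof -
  let ?M = "mat n n (\<lambda>(r,s). if r = s then a + b else a)"
  let ?M1 = "mat n n (\<lambda>(r,s). if r \<in> set [1..<n] then ?M $$ (r,s) + (-1) * ?M $$ (0,s) else ?M $$ (r,s))"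
  have d1: "det ?M1 = det ?M"
    by (rule det_rows_add_multiple) (use n in auto)
  have M1: "?M1 = mat n n (\<lambda>(r,s). if r = 0 then (if s = 0 then a + b else a)
        else (if r = s then b else 0) - (if s = 0 then b else 0))"
    by (intro eq_matI) auto
  let ?T = "transpose_mat ?M1"
  let ?M2 = "mat n n (\<lambda>(r,s). if r = 0 then ?T $$ (r,s) + (\<Sum>x\<in>set [1..<n]. 1 * ?T $$ (x,s)) else ?T $$ (r,s))"
  have d2: "det ?M2 = det ?T"
    by (rule det_row_add_sum) (use n in auto)
  have dT: "det ?T = det ?M1" by (rule det_transpose) auto
  have sum1: "(\<Sum>x\<in>{1..<n}. ?T $$ (x,s)) = (if s = 0 then of_nat (n - 1) * a else b)" if s: "s < n" for s
  proof (cases "s = 0")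
    case True
    have "(\<Sum>x\<in>{1..<n}. ?T $$ (x,s)) = (\<Sum>x\<in>{1..<n}. a)"
      by (rule sum.cong) (use True n in auto)
    then show ?thesis using True by simp
  next
    case False
    have "(\<Sum>x\<in>{1..<n}. ?T $$ (x,s)) = (\<Sum>x\<in>{1..<n}. if x = s then b else 0)"
      by (rule sum.cong) (use False s n in auto)
    also have "\<dots> = b" using False s by (simp add: sum.delta)
    finally show ?thesis using False by simp
  qed
  have M2: "?M2 = mat n n (\<lambda>(r,s). if r = 0 then (if s = 0 then b + of_nat n * a else 0)
        else (if s = 0 then a else if r = s then b else 0))"
  proof (intro eq_matI)
    fix r s assume rs: "r < dim_row (mat n n (\<lambda>(r,s). if r = 0 then (if s = 0 then b + of_nat n * a else 0)
        else (if s = 0 then a else if r = s then b else 0)))"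
      "s < dim_col (mat n n (\<lambda>(r,s). if r = 0 then (if s = 0 then b + of_nat n * a else 0)
        else (if s = 0 then a else if r = s then b else 0)))"
    then have r: "r < n" and s: "s < n" by auto
    show "?M2 $$ (r, s) = mat n n (\<lambda>(r,s). if r = 0 then (if s = 0 then b + of_nat n * a else 0)
        else (if s = 0 then a else if r = s then b else 0)) $$ (r, s)"
    proof (cases "r = 0")
      case True
      have "?M2 $$ (r,s) = ?T $$ (0,s) + (\<Sum>x\<in>{1..<n}. ?T $$ (x,s))"
        using r s True by simp
      also have "\<dots> = (if s = 0 then b + of_nat n * a else 0)"
        using sum1[OF s] s n
        by (cases "s = 0") (auto simp: algebra_simps of_nat_diff)
      finally show ?thesis using True r s by simp
    next
      case False
      then show ?thesis using r s by auto
    qed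
  qed auto
  have "det ?M2 = prod_list (diag_mat ?M2)"
    by (rule det_lower_triangular[of n]) (auto simp: M2)
  also have "\<dots> = (\<Prod>i = 0..<n. ?M2 $$ (i,i))" by (simp add: prod_list_diag_prod)
  also have "\<dots> = (\<Prod>i = 0..<n. if i = 0 then b + of_nat n * a else b)"
    by (rule prod.cong) (auto simp: M2)
  also have "\<dots> = (b + of_nat n * a) * b ^ (n - 1)"
  proof -
    have "{0..<n} = insert 0 {1..<n}" using n by auto
    then show ?thesis by (simp add: prod.insert)
  qed
  finally show ?thesis using d1 d2 dT by (simp add: algebra_simps)
qed



lemma det_permute_both:
  fixes A :: "'a::comm_ring_1 mat"
  assumes A: "A \<in> carrier_mat n n" and p: "\<pi> permutes {0..<n}"
  shows "det (mat n n (\<lambda>(r,s). A $$ (\<pi> r, \<pi> s))) = det A"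
proof -
  let ?B1 = "mat n n (\<lambda>(r,s). A $$ (\<pi> r, s))"
  have d1: "det ?B1 = signof \<pi> * det A" by (rule det_permute_rows[OF A p])
  let ?B = "mat n n (\<lambda>(r,s). A $$ (\<pi> r, \<pi> s))"
  have pn: "\<pi> r < n" if "r < n" for r using p that by (simp add: permutes_in_image)
  have "transpose_mat ?B = mat n n (\<lambda>(r,s). transpose_mat ?B1 $$ (\<pi> r, s))"
    by (intro eq_matI) (auto simp: pn)
  then have "det (transpose_mat ?B) = signof \<pi> * det (transpose_mat ?B1)"
    using det_permute_rows[OF _ p, of "transpose_mat ?B1"] by auto
  then have "det ?B = signof \<pi> * det ?B1"
    using det_transpose[of ?B n] det_transpose[of ?B1 n] by simp
  also have "\<dots> = (signof \<pi> * signof \<pi>) * det A" using d1 by simp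
  also have "signof \<pi> * signof \<pi> = (1::'a)" by (simp add: sign_def)
  finally show ?thesis by simp
qed

definition gmap :: "nat \<Rightarrow> nat \<Rightarrow> nat \<Rightarrow> nat" where
  "gmap i p r = (if r \<le> i then r else r + p)"

lemma det_block_middle:
  fixes A :: "'a::idom mat"
  assumes A: "A \<in> carrier_mat n n" and ij: "i < j" "j < n" and p: "p = j - i - 1"
    and zero: "\<And>r s. i < r \<Longrightarrow> r < j \<Longrightarrow> s < n \<Longrightarrow> \<not>(i < s \<and> s < j) \<Longrightarrow> A $$ (r,s) = 0"
  shows "det A = det (mat p p (\<lambda>(r,s). A $$ (i+1+r, i+1+s))) *
     det (mat (n-p) (n-p) (\<lambda>(r,s). A $$ (gmap i p r, gmap i p s)))"
proof -
  define m where "m = n - p"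
  define \<pi> where "\<pi> k = (if k < m then gmap i p k else if k < n then k - m + i + 1 else k)" for k
  have inj: "inj_on \<pi> {0..<n}"
    unfolding inj_on_def \<pi>_def gmap_def m_def p using ij by auto
  have img: "\<pi> ` {0..<n} \<subseteq> {0..<n}"
    unfolding \<pi>_def gmap_def m_def p using ij by auto
  have bij: "bij_betw \<pi> {0..<n} {0..<n}"
    unfolding bij_betw_def using inj endo_inj_surj[OF _ img inj] by auto
  have perm: "\<pi> permutes {0..<n}"
    by (rule bij_imp_permutes[OF bij]) (auto simp: \<pi>_def m_def)
  let ?B = "mat n n (\<lambda>(r,s). A $$ (\<pi> r, \<pi> s))"
  have dB: "det ?B = det A" by (rule det_permute_both[OF A perm])
  let ?B11 = "mat m m (\<lambda>(r,s). A $$ (gmap i p r, gmap i p s))"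
  let ?B12 = "mat m p (\<lambda>(r,s). A $$ (gmap i p r, i+1+s))"
  let ?B22 = "mat p p (\<lambda>(r,s). A $$ (i+1+r, i+1+s))"
  have nm: "n = m + p" unfolding m_def p using ij by auto
  have eq: "?B = four_block_mat ?B11 ?B12 (0\<^sub>m p m) ?B22"
  proof (intro eq_matI)
    fix r s assume "r < dim_row (four_block_mat ?B11 ?B12 (0\<^sub>m p m) ?B22)"
      "s < dim_col (four_block_mat ?B11 ?B12 (0\<^sub>m p m) ?B22)"
    then have r: "r < n" and s: "s < n" using nm by auto
    show "?B $$ (r,s) = four_block_mat ?B11 ?B12 (0\<^sub>m p m) ?B22 $$ (r,s)"
    proof (cases "r < m")
      case True
      then show ?thesis using r s nm by (auto simp: \<pi>_def add.commute)
    next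
      case False
      then have rr: "i < \<pi> r" "\<pi> r < j" using r ij unfolding \<pi>_def m_def p by auto
      show ?thesis
      proof (cases "s < m")
        case True
        have "\<not> (i < \<pi> s \<and> \<pi> s < j)" using True ij unfolding \<pi>_def m_def p gmap_def by auto
        moreover have "\<pi> s < n" using s img by force
        ultimately have "A $$ (\<pi> r, \<pi> s) = 0" using zero rr by auto
        then show ?thesis using r s nm False True by auto
      next
        case False2: False
        show ?thesis using r s nm False False2 by (auto simp: \<pi>_def add.commute)
      qed
    qed
  qed (use nm in auto)
  have "det ?B = det ?B11 * det ?B22"
    unfolding eq by (rule det_four_block_mat_lower_left_zero) auto
  then show ?thesis using dB m_def by (simp add: mult.commute)
qed



lemma D_key: "b' < n \<and> b' \<noteq> a' + 1 \<and> \<not> (a' = 0 \<and> b' = n - 1)"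
    if "a' < b'" "b' < n" "b' \<noteq> (a' + 1) mod n" "a' \<noteq> (b' + 1) mod n" for a' b' :: nat
proof -
  have "(a' + 1) mod n = a' + 1" using that by (intro mod_less) linarith
  moreover have "(b' + 1) mod n = 0" if "b' = n - 1" using that \<open>b' < n\<close> by simp
  ultimately show ?thesis using that by auto
qed

lemma D_elem:
  assumes "dissection n D" "e \<in> D"
  shows "\<exists>a b. e = {a,b} \<and> a < b \<and> b < n \<and> b \<noteq> a + 1 \<and> \<not> (a = 0 \<and> b = n - 1)"
proof -
  have "\<exists>x y. e = {x,y} \<and> internal_diag n x y"
    using assms unfolding dissection_def by blast
  then obtain x y where e: "e = {x,y}" and xy: "internal_diag n x y" by blast
  have xy': "x < n" "y < n" "x \<noteq> y" "y \<noteq> (x + 1) mod n" "x \<noteq> (y + 1) mod n"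
    using xy unfolding internal_diag_def by simp_all
  show ?thesis
  proof (cases "x < y")
    case True
    have "y < n \<and> y \<noteq> x + 1 \<and> \<not> (x = 0 \<and> y = n - 1)" by (rule D_key[OF True xy'(2,4,5)])
    then show ?thesis using e True by (intro exI[of _ x] exI[of _ y]) simp
  next
    case False
    then have yx: "y < x" using xy'(3) by simp
    have "x < n \<and> x \<noteq> y + 1 \<and> \<not> (y = 0 \<and> x = n - 1)" by (rule D_key[OF yx xy'(1,5,4)])
    moreover have "e = {y,x}" using e by blast
    ultimately show ?thesis using yx by (intro exI[of _ y] exI[of _ x]) simp
  qed
qed

lemma D_pair:
  assumes "dissection n D" "{a,b} \<in> D" "a < b"
  shows "b < n \<and> b \<noteq> a + 1 \<and> \<not> (a = 0 \<and> b = n - 1)"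
proof -
  obtain x y where H: "{a,b} = {x,y} \<and> x < y \<and> y < n \<and> y \<noteq> x + 1 \<and> \<not> (x = 0 \<and> y = n - 1)"
    using D_elem[OF assms(1,2)] by (elim exE) (erule that)
  then have "x = a \<and> y = b" using assms(3) by (auto simp: doubleton_eq_iff)
  then show ?thesis using H by simp
qed

lemma D_nocross:
  assumes "dissection n D" "{a,b} \<in> D" "{c,d} \<in> D"
  shows "\<not> crosses a b c d"
  using assms unfolding dissection_def by blast

lemma crosses_ord: "a < b \<Longrightarrow> c < d \<Longrightarrow> crosses a b c d \<longleftrightarrow> (a < c \<and> c < b \<and> b < d) \<or> (c < a \<and> a < d \<and> d < b)"
  unfolding crosses_def Let_def by (simp add: min_def max_def)

lemma crosses_sym: "crosses a b c d = crosses b a c d" "crosses a b c d = crosses a b d c"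
  unfolding crosses_def Let_def by (simp_all add: min.commute max.commute)

lemma crosses_mono:
  assumes "strict_mono g"
  shows "crosses (g a) (g b) (g c) (g d) = crosses a b c d"
proof -
  have l: "g x < g y \<longleftrightarrow> x < y" for x y using assms by (simp add: strict_mono_less)
  have e: "g x = g y \<longleftrightarrow> x = y" for x y using assms strict_mono_eq by blast
  have mn: "min (g x) (g y) = g (min x y)" "max (g x) (g y) = g (max x y)" for x y
    using l by (auto simp: min_def max_def not_less le_less e)
  show ?thesis unfolding crosses_def Let_def mn l ..
qed

lemma one_side_iff: "one_side n D S \<longleftrightarrow> S \<subseteq> {..<n} \<and>
     (\<forall>a b. {a, b} \<in> D \<and> a < b \<longrightarrow> S \<subseteq> {a..b} \<or> S \<inter> {a<..<b} = {})"
  unfolding one_side_def by blast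

lemma subpolygons_finite: "finite (subpolygons n D)"
proof -
  have "subpolygons n D \<subseteq> Pow {..<n}" unfolding subpolygons_def one_side_def by auto
  then show ?thesis by (rule finite_subset) auto
qed

lemma subpolygons_nonempty: "subpolygons n D \<noteq> {}"
proof -
  have os0: "one_side n D {}" unfolding one_side_def by auto
  have bnd: "\<forall>S. one_side n D S \<longrightarrow> card S < Suc n"
  proof (intro allI impI)
    fix S assume "one_side n D S"
    then have "S \<subseteq> {..<n}" unfolding one_side_def by auto
    then have "card S \<le> n" using card_mono[of "{..<n}" S] by auto
    then show "card S < Suc n" by simp
  qed
  obtain S where S: "one_side n D S" and mx: "\<forall>T. one_side n D T \<longrightarrow> card T \<le> card S"
    using ex_has_greatest_nat[of "one_side n D" "{}" card "Suc n"] os0 bnd by blast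
  have "S \<in> subpolygons n D"
    unfolding subpolygons_def
  proof (intro CollectI conjI allI impI S)
    fix T assume T: "one_side n D T \<and> S \<subseteq> T"
    then have "finite T" unfolding one_side_def using finite_subset by blast
    have "card T \<le> card S" using mx T by auto
    moreover have "card S \<le> card T" using card_mono[OF \<open>finite T\<close>] T by auto
    ultimately show "T = S" using card_subset_eq[OF \<open>finite T\<close>] T by auto
  qed
  then show ?thesis by auto
qed

lemma subpolygons_empty:
  assumes "n \<ge> 1"
  shows "subpolygons n {} = {{..<n}}"
  unfolding subpolygons_def one_side_def by auto



locale ear =
  fixes n :: nat and D :: "nat set set" and i j :: nat
  assumes diss: "dissection n D" and ijD: "{i,j} \<in> D" and ij: "i < j"
    and minl: "\<And>a b. {a,b} \<in> D \<Longrightarrow> a < b \<Longrightarrow> j - i \<le> b - a"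
begin

definition "p = j - i - 1"
definition "m = n - p"
abbreviation "g \<equiv> gmap i p"
definition "E = {i..j}"
definition "R = {i<..<j}"
definition "D' = {e. e \<subseteq> {..<m} \<and> g ` e \<in> D \<and> g ` e \<noteq> {i,j}}"

lemma ij_props: "j < n" "i + 2 \<le> j" "\<not> (i = 0 \<and> j = n - 1)"
  using D_pair[OF diss ijD ij] ij by auto

lemma sep:
  assumes "{a,b} \<in> D" "a < b"
  shows "(a \<le> i \<and> j \<le> b) \<or> b \<le> i \<or> j \<le> a"
proof -
  have "\<not> crosses a b i j" using D_nocross[OF diss assms(1) ijD] .
  then have nc: "\<not> ((a < i \<and> i < b \<and> b < j) \<or> (i < a \<and> a < j \<and> j < b))"
    using crosses_ord[OF assms(2) ij] by simp
  have "j - i \<le> b - a" using minl[OF assms] .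
  then show ?thesis using nc assms(2) ij by arith
qed

lemma sepR:
  assumes "e \<in> D" "e \<noteq> {i,j}"
  shows "e \<inter> R = {}"
proof -
  obtain a b where H: "e = {a,b} \<and> a < b \<and> b < n \<and> b \<noteq> a + 1 \<and> \<not> (a = 0 \<and> b = n - 1)"
    using D_elem[OF diss assms(1)] by (elim exE) (erule that)
  then have "{a,b} \<in> D" "a < b" using assms by auto
  from sep[OF this] have "(a \<le> i \<and> j \<le> b) \<or> b \<le> i \<or> j \<le> a" .
  moreover have "\<not> (a = i \<and> b = j)" using assms H by auto
  ultimately show ?thesis using H unfolding R_def by auto
qed

lemma g_mono: "strict_mono g"
  unfolding strict_mono_def gmap_def by auto

lemma g_less: "g x < n \<longleftrightarrow> x < m"
  using ij_props unfolding gmap_def m_def p_def by auto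

lemma g_notR: "g x \<notin> R"
  using ij unfolding gmap_def R_def p_def by auto

lemma g_surj: "x \<notin> R \<Longrightarrow> x \<in> range g"
proof -
  assume "x \<notin> R"
  then have "x \<le> i \<or> j \<le> x" unfolding R_def by auto
  then show "x \<in> range g"
  proof
    assume "x \<le> i" then have "g x = x" unfolding gmap_def by auto
    then show ?thesis by (metis rangeI)
  next
    assume "j \<le> x" then have "g (x - p) = x" using ij unfolding gmap_def p_def by auto
    then show ?thesis by (metis rangeI)
  qed
qed

lemma g_i: "g i = i" and g_i1: "g (i+1) = j"
  using ij_props unfolding gmap_def p_def by auto

lemma m_props: "m \<ge> 3" "i + 1 < m"
  using ij_props unfolding m_def p_def by auto

lemma g_inj: "inj g" using g_mono strict_mono_imp_inj_on by blast

lemma g_le: "g x \<le> g y \<longleftrightarrow> x \<le> y" using g_mono by (simp add: strict_mono_less_eq)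
lemma g_lt: "g x < g y \<longleftrightarrow> x < y" using g_mono by (simp add: strict_mono_less)

lemma os_split: "one_side n D T \<Longrightarrow> T \<subseteq> E \<or> T \<inter> R = {}"
  unfolding one_side_iff E_def R_def using ijD ij by blast

lemma E_sub: "E \<in> subpolygons n D"
proof -
  have os: "one_side n D E"
    unfolding one_side_iff
  proof (intro conjI allI impI)
    show "E \<subseteq> {..<n}" using ij_props unfolding E_def by auto
    fix a b assume H: "{a, b} \<in> D \<and> a < b"
    then have "(a \<le> i \<and> j \<le> b) \<or> b \<le> i \<or> j \<le> a" using sep by blast
    then show "E \<subseteq> {a..b} \<or> E \<inter> {a<..<b} = {}" unfolding E_def by auto
  qed
  have "T = E" if "one_side n D T" "E \<subseteq> T" for T
  proof -
    have "i + 1 \<in> E \<inter> R" using ij_props unfolding E_def R_def by auto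
    then have "T \<subseteq> E" using os_split[OF that(1)] that(2) by auto
    then show ?thesis using that by auto
  qed
  then show ?thesis using os unfolding subpolygons_def by auto
qed

lemma others_disj:
  assumes "S \<in> subpolygons n D" "S \<noteq> E"
  shows "S \<inter> R = {}"
proof -
  have os: "one_side n D S" and mx: "\<And>T. one_side n D T \<Longrightarrow> S \<subseteq> T \<Longrightarrow> T = S"
    using assms(1) unfolding subpolygons_def by auto
  have "\<not> S \<subseteq> E"
  proof
    assume "S \<subseteq> E"
    moreover have "one_side n D E" using E_sub unfolding subpolygons_def by auto
    ultimately have "E = S" using mx by auto
    then show False using assms(2) by auto
  qed
  then show ?thesis using os_split[OF os] by auto
qed

lemma third_aux:
  assumes x: "x < n" "x \<notin> E"
    and H: "\<And>a b. {a,b} \<in> D \<Longrightarrow> a < b \<Longrightarrow>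
       (a \<le> i \<and> i \<le> b \<and> a \<le> j \<and> j \<le> b \<and> a \<le> x \<and> x \<le> b) \<or>
       (\<not> (a < i \<and> i < b) \<and> \<not> (a < j \<and> j < b) \<and> \<not> (a < x \<and> x < b))"
  shows "\<exists>x<n. x \<notin> E \<and> one_side n D {i,j,x}"
proof (intro exI conjI)
  show "one_side n D {i,j,x}"
    unfolding one_side_iff
  proof (intro conjI allI impI)
    show "{i,j,x} \<subseteq> {..<n}" using x ij_props ij by auto
    fix a b assume "{a, b} \<in> D \<and> a < b"
    then have "(a \<le> i \<and> i \<le> b \<and> a \<le> j \<and> j \<le> b \<and> a \<le> x \<and> x \<le> b) \<or>
       (\<not> (a < i \<and> i < b) \<and> \<not> (a < j \<and> j < b) \<and> \<not> (a < x \<and> x < b))" using H by blast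
    then show "{i, j, x} \<subseteq> {a..b} \<or> {i, j, x} \<inter> {a<..<b} = {}" by auto
  qed
qed (use x in auto)

lemma third: "\<exists>x<n. x \<notin> E \<and> one_side n D {i,j,x}"
proof (cases "\<exists>a b. {a,b} \<in> D \<and> a < b \<and> a \<le> i \<and> j \<le> b \<and> (a,b) \<noteq> (i,j)")
  case True
  then obtain a0 b0 where "{a0,b0} \<in> D \<and> a0 < b0 \<and> a0 \<le> i \<and> j \<le> b0 \<and> (a0,b0) \<noteq> (i,j)" by blast
  then have "(\<lambda>(a,b). {a,b} \<in> D \<and> a < b \<and> a \<le> i \<and> j \<le> b \<and> (a,b) \<noteq> (i,j)) (a0,b0)" by simp
  from ex_has_least_nat[of "\<lambda>(a,b). {a,b} \<in> D \<and> a < b \<and> a \<le> i \<and> j \<le> b \<and> (a,b) \<noteq> (i,j)", OF this,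
      of "\<lambda>(a,b). b - a"]
  obtain k l where kl: "{k,l} \<in> D" "k < l" "k \<le> i" "j \<le> l" "(k,l) \<noteq> (i,j)"
    and klmin: "\<And>a b. {a,b} \<in> D \<Longrightarrow> a < b \<Longrightarrow> a \<le> i \<Longrightarrow> j \<le> b \<Longrightarrow> (a,b) \<noteq> (i,j) \<Longrightarrow> l - k \<le> b - a"
    by (auto simp: split_def)
  have ln: "l < n" using D_pair[OF diss kl(1,2)] by auto
  define x where "x = (if k < i then k else l)"
  show ?thesis
  proof (rule third_aux)
    show "x < n" using ln kl unfolding x_def by auto
    show "x \<notin> E" using kl unfolding x_def E_def by auto
    fix a b assume ab: "{a,b} \<in> D" "a < b"
    have s: "(a \<le> i \<and> j \<le> b) \<or> b \<le> i \<or> j \<le> a" using sep[OF ab] .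
    have "\<not> crosses a b k l" using D_nocross[OF diss ab(1) kl(1)] .
    then have nc: "\<not> ((a < k \<and> k < b \<and> b < l) \<or> (k < a \<and> a < l \<and> l < b))"
      using crosses_ord[OF ab(2) kl(2)] by simp
    have mn: "a \<le> i \<Longrightarrow> j \<le> b \<Longrightarrow> (a,b) \<noteq> (i,j) \<Longrightarrow> l - k \<le> b - a" using klmin[OF ab] by blast
    show "(a \<le> i \<and> i \<le> b \<and> a \<le> j \<and> j \<le> b \<and> a \<le> x \<and> x \<le> b) \<or>
       (\<not> (a < i \<and> i < b) \<and> \<not> (a < j \<and> j < b) \<and> \<not> (a < x \<and> x < b))"
    proof (cases "(a,b) = (i,j)")
      case True
      then show ?thesis using kl ij unfolding x_def by auto
    next
      case False
      then have mn': "a \<le> i \<Longrightarrow> j \<le> b \<Longrightarrow> l - k \<le> b - a" using mn by blast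
      show ?thesis
      proof (cases "k < i")
        case True
        then have xk: "x = k" unfolding x_def by simp
        show ?thesis unfolding xk using s nc mn' kl True ab(2) ij by arith
      next
        case False
        then have xl: "x = l" and ki: "k = i" unfolding x_def using kl by auto
        show ?thesis unfolding xl using s nc mn' kl ki ab(2) ij by arith
      qed
    qed
  qed
next
  case False
  define x where "x = (if 0 < i then 0 else n - 1)"
  show ?thesis
  proof (rule third_aux)
    show "x < n" using ij_props unfolding x_def by auto
    show "x \<notin> E" using ij_props unfolding x_def E_def by auto
    fix a b assume ab: "{a,b} \<in> D" "a < b"
    have s: "(a \<le> i \<and> j \<le> b) \<or> b \<le> i \<or> j \<le> a" using sep[OF ab] .
    have bn: "b < n" using D_pair[OF diss ab] by auto
    have ne: "a \<le> i \<Longrightarrow> j \<le> b \<Longrightarrow> a = i \<and> b = j" using False ab by auto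
    show "(a \<le> i \<and> i \<le> b \<and> a \<le> j \<and> j \<le> b \<and> a \<le> x \<and> x \<le> b) \<or>
       (\<not> (a < i \<and> i < b) \<and> \<not> (a < j \<and> j < b) \<and> \<not> (a < x \<and> x < b))"
      unfolding x_def using s ne bn ij_props ab(2) ij by (cases "0 < i") auto
  qed
qed

lemma D'_iff: "a < m \<Longrightarrow> b < m \<Longrightarrow> {a,b} \<in> D' \<longleftrightarrow> {g a, g b} \<in> D \<and> {g a, g b} \<noteq> {i,j}"
  unfolding D'_def by auto

lemma D_other:
  assumes "{a,b} \<in> D" "a < b" "{a,b} \<noteq> {i,j}"
  shows "\<exists>a' b'. a = g a' \<and> b = g b' \<and> a' < b' \<and> b' < m \<and> {a',b'} \<in> D'"
proof -
  have "{a,b} \<inter> R = {}" using sepR assms by auto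
  then have "a \<notin> R" "b \<notin> R" by auto
  then have "a \<in> range g" "b \<in> range g" using g_surj by auto
  then obtain a' b' where a': "a = g a'" and b': "b = g b'" by blast
  have bn: "b < n" using D_pair[OF diss assms(1,2)] by auto
  have lt: "a' < b'" using assms(2) a' b' g_lt by simp
  have bm: "b' < m" using bn b' g_less by simp
  have "{a',b'} \<in> D'" using D'_iff[of a' b'] lt bm assms a' b' by auto
  then show ?thesis using a' b' lt bm by blast
qed

lemma os_transfer:
  assumes S: "S' \<subseteq> {..<m}"
  shows "one_side m D' S' \<longleftrightarrow> one_side n D (g ` S')"
proof
  assume os: "one_side m D' S'"
  show "one_side n D (g ` S')"
    unfolding one_side_iff
  proof (intro conjI allI impI)
    show "g ` S' \<subseteq> {..<n}" using S g_less by auto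
    fix a b assume H: "{a, b} \<in> D \<and> a < b"
    show "g ` S' \<subseteq> {a..b} \<or> g ` S' \<inter> {a<..<b} = {}"
    proof (cases "{a,b} = {i,j}")
      case True
      then have "a = i" "b = j" using H ij by (auto simp: doubleton_eq_iff)
      then show ?thesis using g_notR unfolding R_def by auto
    next
      case False
      then obtain a' b' where a': "a = g a'" and b': "b = g b'" and "a' < b'" "{a',b'} \<in> D'"
        using D_other H by blast
      then have "S' \<subseteq> {a'..b'} \<or> S' \<inter> {a'<..<b'} = {}" using os unfolding one_side_iff by blast
      then show ?thesis unfolding a' b' using g_le g_lt by auto
    qed
  qed
next
  assume os: "one_side n D (g ` S')"
  show "one_side m D' S'"
    unfolding one_side_iff
  proof (intro conjI allI impI)
    show "S' \<subseteq> {..<m}" by (rule S)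
    fix a b assume H: "{a, b} \<in> D' \<and> a < b"
    then have "g ` {a,b} \<in> D" unfolding D'_def by auto
    then have "{g a, g b} \<in> D" by simp
    moreover have "g a < g b" using H g_lt by auto
    ultimately have "g ` S' \<subseteq> {g a..g b} \<or> g ` S' \<inter> {g a<..<g b} = {}" using os unfolding one_side_iff by blast
    then show "S' \<subseteq> {a..b} \<or> S' \<inter> {a<..<b} = {}" using g_le g_lt by auto
  qed
qed

lemma diss': "dissection m D'"
  unfolding dissection_def
proof (intro conjI ballI allI impI)
  fix e assume e: "e \<in> D'"
  then have ge: "g ` e \<in> D" "g ` e \<noteq> {i,j}" "e \<subseteq> {..<m}" unfolding D'_def by auto
  obtain a b where H: "g ` e = {a,b} \<and> a < b \<and> b < n \<and> b \<noteq> a + 1 \<and> \<not> (a = 0 \<and> b = n - 1)"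
    using D_elem[OF diss ge(1)] by (elim exE) (erule that)
  then obtain a' b' where a': "a = g a'" and b': "b = g b'" and lt: "a' < b'" "b' < m"
    using D_other[of a b] ge by auto
  have ee: "e = {a',b'}"
  proof -
    have "g ` e = g ` {a',b'}" using H a' b' by simp
    then show ?thesis using g_inj by (metis inj_image_eq_iff)
  qed
  have ne: "{a',b'} \<noteq> {i, i+1}"
  proof
    assume "{a',b'} = {i, i+1}"
    then have "g ` e = {i,j}" using ee g_i g_i1 by simp
    then show False using ge by simp
  qed
  have "internal_diag m a' b'"
    unfolding internal_diag_def
  proof (intro conjI)
    show "a' < m" "b' < m" "a' \<noteq> b'" using lt by auto
    have "(a' + 1) mod m = a' + 1" using lt by simp
    moreover have "b' \<noteq> a' + 1"
    proof
      assume b1: "b' = a' + 1"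
      show False
      proof (cases "a' < i")
        case True
        then have "a = a'" "b = a' + 1" using a' b' b1 unfolding gmap_def by auto
        then show False using H by simp
      next
        case False
        show False
        proof (cases "a' = i")
          case True then show False using ne b1 by simp
        next
          case False2: False
          then have "a = a' + p" "b = a' + 1 + p" using a' b' b1 False unfolding gmap_def by auto
          then show False using H by simp
        qed
      qed
    qed
    ultimately show "b' \<noteq> (a' + 1) mod m" by simp
    show "a' \<noteq> (b' + 1) mod m"
    proof (cases "b' + 1 < m")
      case True then show ?thesis using lt by simp
    next
      case False
      then have bm: "b' = m - 1" using lt by simp
      then have "(b' + 1) mod m = 0" using lt by simp
      moreover have "a' \<noteq> 0"
      proof
        assume "a' = 0"
        then have "a = 0" using a' unfolding gmap_def by simp
        moreover have "b = n - 1" using b' bm m_props ij_props unfolding gmap_def m_def p_def by auto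
        ultimately show False using H by simp
      qed
      ultimately show ?thesis by simp
    qed
  qed
  then show "\<exists>a b. e = {a, b} \<and> internal_diag m a b" using ee by blast
next
  fix a b c d assume H: "{a, b} \<in> D' \<and> {c, d} \<in> D'"
  then have "g ` {a,b} \<in> D" "g ` {c,d} \<in> D" unfolding D'_def by auto
  then have "\<not> crosses (g a) (g b) (g c) (g d)" using D_nocross[OF diss] by simp
  then show "\<not> crosses a b c d" using crosses_mono[OF g_mono] by simp
qed

lemma sub_fwd:
  assumes S': "S' \<in> subpolygons m D'"
  shows "g ` S' \<in> subpolygons n D" "g ` S' \<noteq> E"
proof -
  have os': "one_side m D' S'" and mx': "\<And>T. one_side m D' T \<Longrightarrow> S' \<subseteq> T \<Longrightarrow> T = S'"
    using S' unfolding subpolygons_def by auto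
  have Sm: "S' \<subseteq> {..<m}" using os' unfolding one_side_def by auto
  have os: "one_side n D (g ` S')" using os_transfer[OF Sm] os' by simp
  have mx: "T = g ` S'" if T: "one_side n D T" "g ` S' \<subseteq> T" for T
  proof (cases "T \<inter> R = {}")
    case True
    have Tn: "T \<subseteq> {..<n}" using T unfolding one_side_def by auto
    have Tg: "T = g ` (g -` T)" using True g_surj by (auto simp: image_vimage_eq)
    have Tm: "g -` T \<subseteq> {..<m}" using Tn g_less by auto
    have "one_side m D' (g -` T)" using os_transfer[OF Tm] T(1) Tg by simp
    moreover have "S' \<subseteq> g -` T" using T(2) by auto
    ultimately have "g -` T = S'" using mx' by blast
    then show ?thesis using Tg by simp
  next
    case False
    then have TE: "T \<subseteq> E" using os_split[OF T(1)] by auto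
    have "g ` S' \<subseteq> {i,j}"
    proof
      fix y assume y: "y \<in> g ` S'"
      then have "y \<in> {i..j}" using T(2) TE unfolding E_def by blast
      moreover have "y \<notin> {i<..<j}" using y g_notR unfolding R_def by auto
      ultimately show "y \<in> {i,j}" by auto
    qed
    have S'ij: "S' \<subseteq> {i, i+1}"
    proof
      fix y assume "y \<in> S'"
      then have "g y = g i \<or> g y = g (i+1)" using \<open>g ` S' \<subseteq> {i,j}\<close> g_i g_i1 by auto
      then show "y \<in> {i, i+1}" using g_inj by (auto dest: injD)
    qed
    obtain x where x: "x < n" "x \<notin> E" "one_side n D {i,j,x}" using third by blast
    have "x \<notin> R" using x(2) unfolding E_def R_def by auto
    then obtain x' where x': "x = g x'" using g_surj by blast
    have "x' < m" using x(1) x' g_less by simp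
    then have X: "{i, i+1, x'} \<subseteq> {..<m}" using m_props by auto
    have "g ` {i, i+1, x'} = {i,j,x}" using g_i g_i1 x' by simp
    then have "one_side m D' {i, i+1, x'}" using os_transfer[OF X] x(3) by simp
    moreover have "S' \<subseteq> {i, i+1, x'}" using S'ij by auto
    ultimately have eq: "{i, i+1, x'} = S'" using mx' by blast
    have "x \<in> g ` S'" using eq x' by auto
    then have "x \<in> {i,j}" using \<open>g ` S' \<subseteq> {i,j}\<close> by auto
    then show ?thesis using x(2) ij unfolding E_def by auto
  qed
  show "g ` S' \<in> subpolygons n D" unfolding subpolygons_def using os mx by auto
  have "i + 1 \<in> E \<inter> R" using ij_props unfolding E_def R_def by auto
  moreover have "g ` S' \<inter> R = {}" using g_notR by auto
  ultimately show "g ` S' \<noteq> E" by auto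
qed

lemma sub_bwd:
  assumes S: "S \<in> subpolygons n D" "S \<noteq> E"
  shows "g -` S \<in> subpolygons m D'" "S = g ` (g -` S)"
proof -
  have os: "one_side n D S" and mx: "\<And>T. one_side n D T \<Longrightarrow> S \<subseteq> T \<Longrightarrow> T = S"
    using S unfolding subpolygons_def by auto
  have SR: "S \<inter> R = {}" using others_disj[OF S] .
  have Sn: "S \<subseteq> {..<n}" using os unfolding one_side_def by auto
  show Sg: "S = g ` (g -` S)" using SR g_surj by (auto simp: image_vimage_eq)
  have Sm: "g -` S \<subseteq> {..<m}" using Sn g_less by auto
  have os': "one_side m D' (g -` S)" using os_transfer[OF Sm] os Sg by simp
  have "T' = g -` S" if T': "one_side m D' T'" "g -` S \<subseteq> T'" for T'
  proof -
    have Tm: "T' \<subseteq> {..<m}" using T' unfolding one_side_def by auto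
    have "one_side n D (g ` T')" using os_transfer[OF Tm] T' by simp
    moreover have "S \<subseteq> g ` T'" using Sg T'(2) by blast
    ultimately have "g ` T' = S" using mx by blast
    then have "g -` S = T'" using inj_vimage_image_eq[OF g_inj] by metis
    then show ?thesis by simp
  qed
  then show "g -` S \<in> subpolygons m D'" unfolding subpolygons_def using os' by auto
qed

lemma sub_bij: "bij_betw ((`) g) (subpolygons m D') (subpolygons n D - {E})"
  unfolding bij_betw_def
proof
  show "inj_on ((`) g) (subpolygons m D')"
    using g_inj by (auto intro!: inj_onI simp: inj_image_eq_iff)
  show "(`) g ` subpolygons m D' = subpolygons n D - {E}"
  proof
    show "(`) g ` subpolygons m D' \<subseteq> subpolygons n D - {E}" using sub_fwd by auto
    show "subpolygons n D - {E} \<subseteq> (`) g ` subpolygons m D'"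
    proof
      fix S assume "S \<in> subpolygons n D - {E}"
      then have "g -` S \<in> subpolygons m D'" "S = g ` (g -` S)" using sub_bwd by auto
      then show "S \<in> (`) g ` subpolygons m D'" by blast
    qed
  qed
qed

end



lemma ear_exists:
  assumes diss: "dissection n D" and ne: "D \<noteq> {}"
  shows "\<exists>i j. ear n D i j"
proof -
  obtain e where e: "e \<in> D" using ne by blast
  obtain a b where H: "e = {a,b} \<and> a < b \<and> b < n \<and> b \<noteq> a + 1 \<and> \<not> (a = 0 \<and> b = n - 1)"
    using D_elem[OF diss e] by (elim exE) (erule that)
  then have "(\<lambda>(a,b). {a,b} \<in> D \<and> a < b) (a,b)" using e by auto
  from ex_has_least_nat[of "\<lambda>(a,b). {a,b} \<in> D \<and> a < b", OF this, of "\<lambda>(a,b). b - a"]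
  obtain i j where "{i,j} \<in> D" "i < j" "\<And>a b. {a,b} \<in> D \<Longrightarrow> a < b \<Longrightarrow> j - i \<le> b - a"
    by (auto simp: split_def)
  then have "ear n D i j" using diss by unfold_locales auto
  then show ?thesis by blast
qed

lemma weak_friezeD:
  assumes wf: "weak_frieze n D f" and lt: "a < n" "b < n" "c < n" "d < n"
    and cr: "crosses a b c d" and inD: "{a,b} \<in> D \<or> {c,d} \<in> D"
  shows "f {a, b} * f {c, d} = f {a, c} * f {b, d} + f {a, d} * f {b, c}"
proof -
  have H: "a < n \<and> b < n \<and> c < n \<and> d < n \<and> crosses a b c d \<and> ({a, b} \<in> D \<or> {c, d} \<in> D) \<longrightarrow>
        f {a, b} * f {c, d} = f {a, c} * f {b, d} + f {a, d} * f {b, c}"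
    using spec[OF spec[OF spec[OF spec[OF wf[unfolded weak_frieze_def], of a], of b], of c], of d] .
  show ?thesis by (rule mp[OF H]) (use lt cr inD in simp)
qed

lemma frieze_matrix_carrier: "frieze_matrix n f \<in> carrier_mat n n"
  unfolding frieze_matrix_def by auto

lemma frieze_matrix_index: "r < n \<Longrightarrow> s < n \<Longrightarrow> frieze_matrix n f $$ (r,s) = (if r = s then 0 else f {r,s})"
  unfolding frieze_matrix_def by auto

lemma main_base:
  fixes f :: "nat set \<Rightarrow> 'a::field"
  assumes n: "n \<ge> 3"
    and f1: "\<forall>S\<in>subpolygons n {}. \<forall>i\<in>S. \<forall>j\<in>S. i \<noteq> j \<longrightarrow> f {i, j} = 1"
  shows "det (frieze_matrix n f) = (-1) ^ (n - 1) * (\<Prod>S\<in>subpolygons n {}. of_nat (card S - 1)) \<and>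
     (-1::'a) ^ (n - 1) = (-1) ^ (card (subpolygons n {}) - 1) * (\<Prod>S\<in>subpolygons n {}. (-1) ^ (card S - 1))"
proof -
  have sp: "subpolygons n {} = {{..<n}}" using subpolygons_empty n by auto
  have "frieze_matrix n f = mat n n (\<lambda>(r,s). if r = s then 1 + (-1) else (1::'a))"
    using f1 sp by (intro eq_matI) (auto simp: frieze_matrix_index frieze_matrix_def)
  then have "det (frieze_matrix n f) = (-1) ^ (n - 1) * (-1 + of_nat n * 1)"
    using det_const_diag[of n "1::'a" "-1"] n by simp
  also have "(-1 + of_nat n * 1 :: 'a) = of_nat (n - 1)" using n by (simp add: of_nat_diff)
  finally show ?thesis using sp by simp
qed

context ear
begin

lemma wf':
  assumes wf: "weak_frieze n D f"
  shows "weak_frieze m D' (\<lambda>S. f (g ` S))"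
  unfolding weak_frieze_def
proof (intro allI impI)
  fix a b c d assume H: "a < m \<and> b < m \<and> c < m \<and> d < m \<and> crosses a b c d \<and> ({a, b} \<in> D' \<or> {c, d} \<in> D')"
  have lt: "g a < n" "g b < n" "g c < n" "g d < n" using H g_less by auto
  have cr: "crosses (g a) (g b) (g c) (g d)" using H crosses_mono[OF g_mono] by simp
  have "{g a, g b} \<in> D \<or> {g c, g d} \<in> D" using H unfolding D'_def by auto
  then have "f {g a, g b} * f {g c, g d} = f {g a, g c} * f {g b, g d} + f {g a, g d} * f {g b, g c}"
    by (rule weak_friezeD[OF wf lt cr])
  then show "f (g ` {a, b}) * f (g ` {c, d}) = f (g ` {a, c}) * f (g ` {b, d}) + f (g ` {a, d}) * f (g ` {b, c})"
    by simp
qed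

lemma f1':
  assumes f1: "\<forall>S\<in>subpolygons n D. \<forall>a\<in>S. \<forall>b\<in>S. a \<noteq> b \<longrightarrow> f {a,b} = 1"
  shows "\<forall>S\<in>subpolygons m D'. \<forall>a\<in>S. \<forall>b\<in>S. a \<noteq> b \<longrightarrow> f (g ` {a,b}) = 1"
proof (intro ballI impI)
  fix S a b assume S: "S \<in> subpolygons m D'" and ab: "a \<in> S" "b \<in> S" "a \<noteq> b"
  have "g ` S \<in> subpolygons n D" using sub_fwd[OF S] by simp
  moreover have "g a \<in> g ` S" "g b \<in> g ` S" "g a \<noteq> g b" using ab g_inj by (auto dest: injD)
  ultimately have "f {g a, g b} = 1" using f1 by blast
  then show "f (g ` {a,b}) = 1" by simp
qed

lemma step:
  fixes f :: "nat set \<Rightarrow> 'a::field"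
  assumes wf: "weak_frieze n D f"
    and f1: "\<forall>S\<in>subpolygons n D. \<forall>a\<in>S. \<forall>b\<in>S. a \<noteq> b \<longrightarrow> f {a,b} = 1"
    and IH: "det (frieze_matrix m (\<lambda>S. f (g ` S))) = (-1) ^ (m - 1) * (\<Prod>S\<in>subpolygons m D'. of_nat (card S - 1)) \<and>
     (-1::'a) ^ (m - 1) = (-1) ^ (card (subpolygons m D') - 1) * (\<Prod>S\<in>subpolygons m D'. (-1) ^ (card S - 1))"
  shows "det (frieze_matrix n f) = (-1) ^ (n - 1) * (\<Prod>S\<in>subpolygons n D. of_nat (card S - 1)) \<and>
     (-1::'a) ^ (n - 1) = (-1) ^ (card (subpolygons n D) - 1) * (\<Prod>S\<in>subpolygons n D. (-1) ^ (card S - 1))"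
proof -
  let ?A = "frieze_matrix n f"
  have A: "?A \<in> carrier_mat n n" by (rule frieze_matrix_carrier)
  have jn: "j < n" and ij2: "i + 2 \<le> j" using ij_props by auto
  have fE: "f {a,b} = 1" if "a \<in> E" "b \<in> E" "a \<noteq> b" for a b
    using f1 E_sub that by blast
  have Aidx: "?A $$ (r,s) = (if r = s then 0 else f {r,s})" if "r < n" "s < n" for r s
    using that by (rule frieze_matrix_index)
  have ptol: "f {r,s} = f {i,s} + f {j,s}" if r: "i < r" "r < j" and s: "s < n" "s \<notin> E" for r s
  proof -
    have rn: "r < n" using r jn by auto
    have cr: "crosses r s i j" using r s ij unfolding E_def crosses_def Let_def min_def max_def by auto
    have "f {r,s} * f {i,j} = f {r,i} * f {s,j} + f {r,j} * f {s,i}"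
      by (rule weak_friezeD[OF wf rn s(1) _ jn cr]) (use ij jn ijD in auto)
    moreover have "f {i,j} = 1" "f {r,i} = 1" "f {r,j} = 1" using fE r ij unfolding E_def by auto
    ultimately show ?thesis by (simp add: insert_commute add.commute)
  qed
  let ?xs = "[i+1..<j]"
  have xs: "set ?xs = R" unfolding R_def by auto
  let ?A1 = "mat n n (\<lambda>(r,s). if r \<in> set ?xs then ?A $$ (r,s) + (-1) * ?A $$ (i,s) else ?A $$ (r,s))"
  have d1: "det ?A1 = det ?A" by (rule det_rows_add_multiple[OF A]) (use ij jn in auto)
  have A1: "?A1 \<in> carrier_mat n n" by simp
  let ?A2 = "mat n n (\<lambda>(r,s). if r \<in> set ?xs then ?A1 $$ (r,s) + (-1) * ?A1 $$ (j,s) else ?A1 $$ (r,s))"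
  have d2: "det ?A2 = det ?A1" by (rule det_rows_add_multiple[OF A1]) (use ij jn in auto)
  have A2idx: "?A2 $$ (r,s) = (if i < r \<and> r < j then ?A $$ (r,s) - ?A $$ (i,s) - ?A $$ (j,s) else ?A $$ (r,s))"
    if "r < n" "s < n" for r s
    using that jn by auto
  have zero: "?A2 $$ (r,s) = 0" if "i < r" "r < j" "s < n" "\<not> (i < s \<and> s < j)" for r s
  proof -
    have rn: "r < n" using that jn by auto
    have "?A2 $$ (r,s) = ?A $$ (r,s) - ?A $$ (i,s) - ?A $$ (j,s)" using A2idx[OF rn that(3)] that(1,2) by simp
    also have "\<dots> = 0"
    proof (cases "s = i \<or> s = j")
      case True
      then show ?thesis using that fE ij jn unfolding E_def
        by (auto simp: Aidx insert_commute)
    next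
      case False
      then have "s \<notin> E" using that unfolding E_def by auto
      then show ?thesis using ptol[OF that(1,2,3)] that False ij jn
        by (auto simp: Aidx)
    qed
    finally show ?thesis .
  qed
  have blk: "det ?A2 = det (mat p p (\<lambda>(r,s). ?A2 $$ (i+1+r, i+1+s))) *
     det (mat (n-p) (n-p) (\<lambda>(r,s). ?A2 $$ (g r, g s)))"
    by (rule det_block_middle[of _ n i j p]) (use ij jn zero in \<open>auto simp: p_def\<close>)
  have B22: "mat p p (\<lambda>(r,s). ?A2 $$ (i+1+r, i+1+s)) = mat p p (\<lambda>(r,s). if r = s then (-1) + (-1) else (-1::'a))"
  proof (intro eq_matI)
    fix r s assume "r < dim_row (mat p p (\<lambda>(r,s). if r = s then (-1) + (-1) else (-1::'a)))"
      "s < dim_col (mat p p (\<lambda>(r,s). if r = s then (-1) + (-1) else (-1::'a)))"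
    then have r: "r < p" and s: "s < p" by auto
    have rr: "i < i+1+r" "i+1+r < j" "i+1+s < j" "i < i+1+s" using r s unfolding p_def by auto
    then have "?A2 $$ (i+1+r, i+1+s) = ?A $$ (i+1+r, i+1+s) - ?A $$ (i, i+1+s) - ?A $$ (j, i+1+s)"
      using A2idx jn by auto
    also have "\<dots> = (if r = s then (-1) + (-1) else (-1::'a))"
      using rr jn fE[of "i+1+r" "i+1+s"] fE[of i "i+1+s"] fE[of j "i+1+s"] unfolding E_def
      by (auto simp: Aidx)
    finally show "mat p p (\<lambda>(r,s). ?A2 $$ (i+1+r, i+1+s)) $$ (r, s) = mat p p (\<lambda>(r,s). if r = s then (-1) + (-1) else (-1::'a)) $$ (r, s)"
      using r s by simp
  qed auto
  have p1: "p \<ge> 1" using ij2 unfolding p_def by auto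
  have dB22: "det (mat p p (\<lambda>(r,s). ?A2 $$ (i+1+r, i+1+s))) = (-1) ^ p * of_nat (p + 1)"
  proof -
    have "det (mat p p (\<lambda>(r,s). if r = s then (-1) + (-1) else (-1::'a))) = (-1) ^ (p - 1) * ((-1) + of_nat p * (-1))"
      using det_const_diag[OF p1, of "-1::'a" "-1"] by simp
    also have "\<dots> = (-1) ^ p * of_nat (p + 1)"
    proof -
      obtain q where q: "p = Suc q" using p1 by (cases p) auto
      have "(-1::'a) ^ p = (-1) ^ (p - 1) * (-1)" unfolding q by simp
      then show ?thesis by (simp add: algebra_simps)
    qed
    finally show ?thesis using B22 by simp
  qed
  have B11: "mat (n-p) (n-p) (\<lambda>(r,s). ?A2 $$ (g r, g s)) = frieze_matrix m (\<lambda>S. f (g ` S))"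
  proof (intro eq_matI)
    fix r s assume "r < dim_row (frieze_matrix m (\<lambda>S. f (g ` S)))" "s < dim_col (frieze_matrix m (\<lambda>S. f (g ` S)))"
    then have r: "r < m" and s: "s < m" unfolding frieze_matrix_def by auto
    have gr: "g r < n" "g s < n" using r s g_less by auto
    have nr: "\<not> (i < g r \<and> g r < j)" using g_notR unfolding R_def by auto
    have "?A2 $$ (g r, g s) = ?A $$ (g r, g s)" using A2idx[OF gr(1) gr(2)] nr by simp
    also have "\<dots> = (if r = s then 0 else f {g r, g s})" using Aidx gr g_inj by (auto dest: injD)
    finally show "mat (n-p) (n-p) (\<lambda>(r,s). ?A2 $$ (g r, g s)) $$ (r, s) = frieze_matrix m (\<lambda>S. f (g ` S)) $$ (r, s)"
      using r s unfolding m_def by (simp add: frieze_matrix_index[folded m_def])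
  qed (auto simp: m_def frieze_matrix_def)
  have detA: "det ?A = (-1) ^ p * of_nat (p + 1) * det (frieze_matrix m (\<lambda>S. f (g ` S)))"
    using d1 d2 blk dB22 B11 by simp
  have fin: "finite (subpolygons n D)" by (rule subpolygons_finite)
  have Ein: "E \<in> subpolygons n D" by (rule E_sub)
  have cE: "card E = p + 2" unfolding E_def p_def using ij2 by auto
  have prod_split: "(\<Prod>S\<in>subpolygons n D. h (card S)) = h (p + 2) * (\<Prod>S\<in>subpolygons m D'. h (card S))"
    for h :: "nat \<Rightarrow> 'a"
  proof -
    have "(\<Prod>S\<in>subpolygons n D. h (card S)) = h (card E) * (\<Prod>S\<in>subpolygons n D - {E}. h (card S))"
      using fin Ein by (simp add: prod.remove)
    also have "(\<Prod>S\<in>subpolygons n D - {E}. h (card S)) = (\<Prod>S\<in>subpolygons m D'. h (card (g ` S)))"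
      using prod.reindex_bij_betw[OF sub_bij, of "\<lambda>S. h (card S)"] by simp
    also have "\<dots> = (\<Prod>S\<in>subpolygons m D'. h (card S))"
      using g_inj by (intro prod.cong refl) (simp add: card_image inj_on_subset)
    finally show ?thesis using cE by simp
  qed
  have card_split: "card (subpolygons n D) = card (subpolygons m D') + 1"
  proof -
    have "card (subpolygons n D - {E}) = card (subpolygons m D')"
      using bij_betw_same_card[OF sub_bij] by simp
    then show ?thesis using fin Ein by (simp add: card_Diff_singleton) (metis Suc_pred card_gt_0_iff empty_iff)
  qed
  have l1: "card (subpolygons m D') \<ge> 1"
    using subpolygons_nonempty[of m D'] subpolygons_finite[of m D'] by (simp add: Suc_le_eq card_gt_0_iff)
  have nm: "n - 1 = p + (m - 1)" using m_props unfolding m_def p_def using ij_props by auto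
  define P' where "P' = (\<Prod>S\<in>subpolygons m D'. (of_nat (card S - 1) :: 'a))"
  define Q' where "Q' = (\<Prod>S\<in>subpolygons m D'. (-1::'a) ^ (card S - 1))"
  define l' where "l' = card (subpolygons m D')"
  have IH1: "det (frieze_matrix m (\<lambda>S. f (g ` S))) = (-1) ^ (m - 1) * P'" using IH P'_def by simp
  have IH2: "(-1::'a) ^ (m - 1) = (-1) ^ (l' - 1) * Q'" using IH Q'_def l'_def by simp
  have P: "(\<Prod>S\<in>subpolygons n D. (of_nat (card S - 1) :: 'a)) = of_nat (p + 1) * P'"
    unfolding P'_def using prod_split[of "\<lambda>c. of_nat (c - 1)"] by simp
  have Q: "(\<Prod>S\<in>subpolygons n D. (-1::'a) ^ (card S - 1)) = (-1) ^ (p + 1) * Q'"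
    unfolding Q'_def using prod_split[of "\<lambda>c. (-1) ^ (c - 1)"] by simp
  have L: "card (subpolygons n D) - 1 = l'" using card_split l'_def by simp
  have l'1: "l' = Suc (l' - 1)" using l1 l'_def by simp
  show ?thesis
  proof
    show "det ?A = (-1) ^ (n - 1) * (\<Prod>S\<in>subpolygons n D. of_nat (card S - 1))"
      unfolding detA IH1 P nm power_add by (simp add: algebra_simps)
    have "(-1::'a) ^ (n - 1) = (-1) ^ p * ((-1) ^ (l' - 1) * Q')" unfolding nm power_add IH2 ..
    also have "\<dots> = (-1) ^ l' * ((-1) ^ (p + 1) * Q')"
      by (subst l'1) (simp add: algebra_simps)
    finally show "(-1::'a) ^ (n - 1) = (-1) ^ (card (subpolygons n D) - 1) * (\<Prod>S\<in>subpolygons n D. (-1) ^ (card S - 1))"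
      unfolding L Q .
  qed
qed

end

lemma main:
  fixes f :: "nat set \<Rightarrow> 'a::field"
  assumes "n \<ge> 3" "dissection n D" "weak_frieze n D f"
    "\<forall>S\<in>subpolygons n D. \<forall>i\<in>S. \<forall>j\<in>S. i \<noteq> j \<longrightarrow> f {i, j} = 1"
  shows "det (frieze_matrix n f) = (-1) ^ (n - 1) * (\<Prod>S\<in>subpolygons n D. of_nat (card S - 1)) \<and>
     (-1::'a) ^ (n - 1) = (-1) ^ (card (subpolygons n D) - 1) * (\<Prod>S\<in>subpolygons n D. (-1) ^ (card S - 1))"
  using assms
proof (induction n arbitrary: D f rule: less_induct)
  case (less n)
  show ?case
  proof (cases "D = {}")
    case True
    then show ?thesis using main_base[of n f] less.prems by simp
  next
    case False
    obtain i j where e: "ear n D i j" using ear_exists less.prems(2) False by blast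
    interpret ear n D i j by (rule e)
    have mn: "m < n" using ij_props unfolding m_def p_def by auto
    have IH: "det (frieze_matrix m (\<lambda>S. f (g ` S))) = (-1) ^ (m - 1) * (\<Prod>S\<in>subpolygons m D'. of_nat (card S - 1)) \<and>
     (-1::'a) ^ (m - 1) = (-1) ^ (card (subpolygons m D') - 1) * (\<Prod>S\<in>subpolygons m D'. (-1) ^ (card S - 1))"
      using less.IH[OF mn m_props(1) diss' wf'[OF less.prems(3)] f1'[OF less.prems(4)]] .
    show ?thesis by (rule step[OF less.prems(3,4) IH])
  qed
qed

theorem corollary4p1:
  fixes n :: nat and D :: "nat set set" and f :: "nat set \<Rightarrow> 'a::field"
  assumes "n \<ge> 3"
    and "dissection n D"
    and "weak_frieze n D f"
    and "\<forall>S\<in>subpolygons n D. \<forall>i\<in>S. \<forall>j\<in>S. i \<noteq> j \<longrightarrow> f {i, j} = 1"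
  shows "det (frieze_matrix n f) =
           (-1) ^ (card (subpolygons n D) - 1) *
           (\<Prod>S\<in>subpolygons n D. (-1) ^ (card S - 1) * of_nat (card S - 1))
       \<and> det (frieze_matrix n f) =
           (-1) ^ (n - 1) * (\<Prod>S\<in>subpolygons n D. of_nat (card S - 1))"
proof -
  have M: "det (frieze_matrix n f) = (-1) ^ (n - 1) * (\<Prod>S\<in>subpolygons n D. of_nat (card S - 1))"
    and S: "(-1::'a) ^ (n - 1) = (-1) ^ (card (subpolygons n D) - 1) * (\<Prod>S\<in>subpolygons n D. (-1) ^ (card S - 1))"
    using main[OF assms] by auto
  have "(-1) ^ (card (subpolygons n D) - 1) *
           (\<Prod>S\<in>subpolygons n D. (-1) ^ (card S - 1) * of_nat (card S - 1)) =
        (-1) ^ (card (subpolygons n D) - 1) * (\<Prod>S\<in>subpolygons n D. (-1::'a) ^ (card S - 1)) *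
        (\<Prod>S\<in>subpolygons n D. of_nat (card S - 1))"
    by (simp add: prod.distrib mult.assoc)
  also have "\<dots> = det (frieze_matrix n f)" using M S by simp
  finally show ?thesis using M by simp
qed


end
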